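(* Let $n \in \mathbb{N}$ and $M,N \in \mathcal{M}_n(\mathbb{C})$. Let $P_\perp$ denote the orthogonal projection of $\mathbb{C}^{2n}$ onto $\left[\mathcal{R}\begin{pmatrix} N \\ \overline{M}\end{pmatrix}\right]^{\perp}$, where $\begin{pmatrix} N \\ \overline{M}\end{pmatrix}$ is the $2n\times n$ complex matrix obtained by stacking $N$ on top of $\overline{M}$. The following are equivalent: \begin{enumerate} \item $\{ z \in \mathbb{C}^n \mid Mz + N\bar{z} = 0\}$ is a complex vector subspace of $\mathbb{C}^n$ (i.e. it is closed under multiplication by $i$). \item The (real-linear) map $\mathbb{C}^n \to \mathbb{C}^{2n}$, $z \mapsto P_\perp \begin{pmatrix} z \\ \bar z\end{pmatrix}$, is injective. \item There exist $U,V \in \mathcal{M}_n(\mathbb{C})$ such that for every $p \in \mathcal{R}(M,N)$, $$\{ z \in \mathbb{C}^n \mid Mz + N\bar z = p\} = \{ z \in \mathbb{C}^n \mid (UM + V\overline{N})z = Up + V\overline{p}\}.$$ \end{enumerate}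
   Context: $\mathcal{M}_n(\mathbb{C})$ is the set of $n\times n$ complex matrices; $\bar z$, $\overline{M}$ denote entrywise complex conjugation. $\mathbb{C}^{2n}$ is equipped with the Hermitian inner product $\langle u,v\rangle = \sum_{k=1}^{2n} u_k \bar v_k$, and $\perp$ denotes the orthogonal complement with respect to it. $\mathcal{R}(X)$ denotes the range (column space) of a matrix $X$. The range of the system is $\mathcal{R}(M,N) := \{ p \in \mathbb{C}^n \mid \exists z \in \mathbb{C}^n : Mz + N\bar z = p\}$. *)

theory Defs
  imports "HOL-Analysis.Analysis"
begin

definition cvec :: "complex^'n \<Rightarrow> complex^'n" where
  "cvec z = (\<chi> i. cnj (z $ i))"

definition cmat :: "complex^'n^'m \<Rightarrow> complex^'n^'m" where
  "cmat M = (\<chi> i j. cnj (M $ i $ j))"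

definition herm :: "complex^'m \<Rightarrow> complex^'m \<Rightarrow> complex" where
  "herm u v = (\<Sum>k\<in>UNIV. u $ k * cnj (v $ k))"

definition horth :: "(complex^'m) set \<Rightarrow> (complex^'m) set" where
  "horth S = {u. \<forall>v\<in>S. herm u v = 0}"

definition hproj :: "(complex^'m) set \<Rightarrow> complex^'m \<Rightarrow> complex^'m" where
  "hproj S x = (THE y. y \<in> S \<and> x - y \<in> horth S)"

definition crange :: "complex^'n^'m \<Rightarrow> (complex^'m) set" where
  "crange A = {A *v x | x. True}"

definition stack_mat :: "complex^'n^'k \<Rightarrow> complex^'n^'k \<Rightarrow> complex^'n^('k + 'k)" where
  "stack_mat A B = (\<chi> i. case i of Inl j \<Rightarrow> A $ j | Inr j \<Rightarrow> B $ j)"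

definition stack_vec :: "complex^'n \<Rightarrow> complex^'n \<Rightarrow> complex^('n + 'n)" where
  "stack_vec u v = (\<chi> i. case i of Inl j \<Rightarrow> u $ j | Inr j \<Rightarrow> v $ j)"

definition sys_range :: "complex^'n^'n \<Rightarrow> complex^'n^'n \<Rightarrow> (complex^'n) set" where
  "sys_range M N = {p. \<exists>z. M *v z + N *v cvec z = p}"

end

theory Submission
  imports Defs
begin

definition hadj :: "complex^'n^'m \<Rightarrow> complex^'m^'n" where
  "hadj B = cmat (transpose B)"

lemma hadj_comp: "(hadj B *v v) $ k = (\<Sum>j\<in>UNIV. cnj (B$j$k) * v$j)"
  unfolding hadj_def cmat_def transpose_def matrix_vector_mult_def by simp

lemma hadj_herm: "herm (hadj B *v v) x = herm v (B *v x)"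
proof -
  have "herm (hadj B *v v) x = (\<Sum>k\<in>UNIV. (\<Sum>j\<in>UNIV. cnj (B$j$k) * v$j) * cnj (x$k))"
    unfolding herm_def hadj_comp by (rule refl)
  also have "\<dots> = (\<Sum>k\<in>UNIV. \<Sum>j\<in>UNIV. cnj (B$j$k) * v$j * cnj (x$k))"
    by (rule sum.cong[OF refl], rule sum_distrib_right)
  also have "\<dots> = (\<Sum>j\<in>UNIV. \<Sum>k\<in>UNIV. cnj (B$j$k) * v$j * cnj (x$k))"
    by (rule sum.swap)
  also have "\<dots> = (\<Sum>j\<in>UNIV. \<Sum>k\<in>UNIV. v$j * (cnj (B$j$k) * cnj (x$k)))"
    by (intro sum.cong refl) (simp add: mult.commute mult.left_commute)
  also have "\<dots> = (\<Sum>j\<in>UNIV. v$j * (\<Sum>k\<in>UNIV. cnj (B$j$k) * cnj (x$k)))"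
    by (rule sum.cong[OF refl], rule sum_distrib_left[symmetric])
  also have "\<dots> = (\<Sum>j\<in>UNIV. v$j * cnj (\<Sum>k\<in>UNIV. B$j$k * x$k))"
    by (simp add: cnj_sum)
  also have "\<dots> = herm v (B *v x)"
    unfolding herm_def matrix_vector_mult_def by simp
  finally show ?thesis .
qed


lemma cvec_add[simp]: "cvec (x + y) = cvec x + cvec y"
  by (simp add: cvec_def vec_eq_iff)
lemma cvec_diff[simp]: "cvec (x - y) = cvec x - cvec y"
  by (simp add: cvec_def vec_eq_iff)
lemma cvec_minus[simp]: "cvec (- x) = - cvec x"
  by (simp add: cvec_def vec_eq_iff)
lemma cvec_zero[simp]: "cvec 0 = 0"
  by (simp add: cvec_def vec_eq_iff)
lemma cvec_scale[simp]: "cvec (c *s x) = cnj c *s cvec x"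
  by (simp add: cvec_def vec_eq_iff)
lemma cvec_cvec[simp]: "cvec (cvec x) = x"
  by (simp add: cvec_def vec_eq_iff)
lemma cmat_cmat[simp]: "cmat (cmat x) = x"
  by (simp add: cmat_def vec_eq_iff)
lemma cvec_eq0[simp]: "cvec x = 0 \<longleftrightarrow> x = 0"
  by (metis cvec_cvec cvec_zero)
lemma cvec_mult[simp]: "cvec (A *v x) = cmat A *v cvec x"
  by (simp add: cvec_def cmat_def vec_eq_iff matrix_vector_mult_def)

lemma stack_mult: "stack_mat A B *v x = stack_vec (A *v x) (B *v x)"
  by (simp add: stack_mat_def stack_vec_def vec_eq_iff matrix_vector_mult_def split: sum.splits)
lemma stack_vec_add: "stack_vec a b + stack_vec c d = stack_vec (a + c) (b + d)"
  by (simp add: stack_vec_def vec_eq_iff split: sum.splits)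
lemma stack_vec_diff: "stack_vec a b - stack_vec c d = stack_vec (a - c) (b - d)"
  by (simp add: stack_vec_def vec_eq_iff split: sum.splits)
lemma stack_vec_eq: "stack_vec a b = stack_vec c d \<longleftrightarrow> a = c \<and> b = d"
  apply (simp add: stack_vec_def vec_eq_iff split: sum.splits)
  by (metis sum.case(1) sum.case(2))
lemma stack_vec_zero: "stack_vec 0 0 = 0"
  by (simp add: stack_vec_def vec_eq_iff split: sum.splits)

lemma herm_add_left: "herm (u + w) v = herm u v + herm w v"
  by (simp add: herm_def sum.distrib distrib_right)
lemma herm_diff_left: "herm (u - w) v = herm u v - herm w v"
  by (simp add: herm_def sum_subtractf left_diff_distrib)
lemma herm_add_right: "herm u (v + w) = herm u v + herm u w"
  by (simp add: herm_def sum.distrib distrib_left)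
lemma herm_scale_left: "herm (c *s u) v = c * herm u v"
  by (simp add: herm_def sum_distrib_left mult.assoc)
lemma herm_scale_right: "herm u (c *s v) = cnj c * herm u v"
  by (simp add: herm_def sum_distrib_left mult_ac)
lemma herm_cnj: "herm v u = cnj (herm u v)"
  by (simp add: herm_def mult.commute)
lemma Re_herm: "Re (herm u v) = inner u v"
  by (simp add: herm_def inner_vec_def inner_complex_def Re_sum)
lemma herm_self0: "herm u u = 0 \<Longrightarrow> u = 0"
  by (metis Re_herm inner_eq_zero_iff zero_complex.simps(1))

lemma scaleR_s: "c *\<^sub>R (x::complex^'m) = complex_of_real c *s x"
  unfolding vec_eq_iff by (simp add: scaleR_conv_of_real[where 'a=complex])

lemma crange_mem: "v \<in> crange A \<longleftrightarrow> (\<exists>x. v = A *v x)"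
  by (auto simp: crange_def)

lemma crange_diff: "u \<in> crange A \<Longrightarrow> v \<in> crange A \<Longrightarrow> u - v \<in> crange A"
proof -
  assume "u \<in> crange A" "v \<in> crange A"
  then obtain x y where "u = A *v x" "v = A *v y" unfolding crange_mem by blast
  then have "u - v = A *v (x - y)" by (simp add: matrix_vector_mult_diff_distrib)
  then show ?thesis unfolding crange_mem by blast
qed
lemma crange_add: "u \<in> crange A \<Longrightarrow> v \<in> crange A \<Longrightarrow> u + v \<in> crange A"
proof -
  assume "u \<in> crange A" "v \<in> crange A"
  then obtain x y where "u = A *v x" "v = A *v y" unfolding crange_mem by blast
  then have "u + v = A *v (x + y)" by (simp add: matrix_vector_right_distrib)
  then show ?thesis unfolding crange_mem by blast
qed
lemma crange_scale: "u \<in> crange A \<Longrightarrow> c *s u \<in> crange A"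
proof -
  assume "u \<in> crange A"
  then obtain x where "u = A *v x" unfolding crange_mem by blast
  then have "c *s u = A *v (c *s x)" by (simp add: vector_scalar_commute)
  then show ?thesis unfolding crange_mem by blast
qed
lemma crange_zero: "0 \<in> crange A"
proof -
  have "0 = A *v 0" by simp
  then show ?thesis unfolding crange_mem by blast
qed

lemma crange_subspace: "subspace (crange A)"
  unfolding subspace_def
  using crange_zero crange_add crange_scale scaleR_s by metis

lemma horth_diff: "u \<in> horth S \<Longrightarrow> v \<in> horth S \<Longrightarrow> u - v \<in> horth S"
  by (simp add: horth_def herm_diff_left)
lemma horth_add: "u \<in> horth S \<Longrightarrow> v \<in> horth S \<Longrightarrow> u + v \<in> horth S"
  by (simp add: horth_def herm_add_left)
lemma horth_scale: "u \<in> horth S \<Longrightarrow> c *s u \<in> horth S"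
  by (simp add: horth_def herm_scale_left)
lemma horth_horth: "u \<in> S \<Longrightarrow> u \<in> horth (horth S)"
  unfolding horth_def by (auto simp: herm_cnj[of u])

lemma proj_exists: "\<exists>z. z \<in> horth (crange A) \<and> x - z \<in> crange A"
proof -
  obtain y z where y: "y \<in> span (crange A)" and z: "\<And>w. w \<in> span (crange A) \<Longrightarrow> orthogonal z w"
    and xyz: "x = y + z"
    using orthogonal_subspace_decomp_exists[of "crange A" x] by metis
  have sp: "span (crange A) = crange A" using crange_subspace span_eq_iff by blast
  have "z \<in> horth (crange A)"
    unfolding horth_def
  proof (intro CollectI ballI)
    fix v assume v: "v \<in> crange A"
    have "Re (herm z v) = 0" using z[of v] v sp by (simp add: Re_herm orthogonal_def)
    moreover have "Re (herm z (\<i> *s v)) = 0" using z[of "\<i> *s v"] crange_scale[OF v] sp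
      by (simp add: Re_herm orthogonal_def)
    ultimately show "herm z v = 0" by (simp add: herm_scale_right complex_eq_iff)
  qed
  moreover have "x - z \<in> crange A" using xyz y sp by simp
  ultimately show ?thesis by blast
qed

lemma proj_char:
  assumes "z \<in> horth (crange A)" "x - z \<in> crange A"
  shows "hproj (horth (crange A)) x = z"
  unfolding hproj_def
proof (rule the_equality)
  show "z \<in> horth (crange A) \<and> x - z \<in> horth (horth (crange A))"
    using assms horth_horth by blast
  fix y assume y: "y \<in> horth (crange A) \<and> x - y \<in> horth (horth (crange A))"
  have d: "z - y \<in> horth (crange A)" using y assms horth_diff by blast
  have h1: "herm (x - y) (z - y) = 0"
    using y d unfolding horth_def by blast
  have h2: "herm (x - z) (z - y) = 0"
    using horth_horth[OF assms(2)] d unfolding horth_def by blast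
  have "z - y = (x - y) - (x - z)" by simp
  then have "herm (z - y) (z - y) = herm (x - y) (z - y) - herm (x - z) (z - y)"
    by (metis herm_diff_left)
  then have "herm (z - y) (z - y) = 0" using h1 h2 by simp
  then have "z - y = 0" by (rule herm_self0)
  then show "y = z" by simp
qed

lemma proj_props: "hproj (horth (crange A)) x \<in> horth (crange A) \<and> x - hproj (horth (crange A)) x \<in> crange A"
proof -
  obtain z where "z \<in> horth (crange A)" "x - z \<in> crange A" using proj_exists[of A x] by blast
  moreover then have "hproj (horth (crange A)) x = z" by (rule proj_char)
  ultimately show ?thesis by simp
qed

lemma proj_eq_iff: "hproj (horth (crange A)) x = hproj (horth (crange A)) y \<longleftrightarrow> x - y \<in> crange A"
proof
  let ?P = "hproj (horth (crange A))"
  assume "?P x = ?P y"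
  then have "x - y = (x - ?P x) - (y - ?P y)" by simp
  then show "x - y \<in> crange A" using proj_props[of A x] proj_props[of A y] crange_diff by metis
next
  let ?P = "hproj (horth (crange A))"
  assume xy: "x - y \<in> crange A"
  have "?P x - ?P y = (x - y) - (x - ?P x) + (y - ?P y)" by simp
  then have r: "?P x - ?P y \<in> crange A" using proj_props[of A x] proj_props[of A y] crange_diff[OF xy] crange_add by metis
  have "?P x - ?P y \<in> horth (crange A)" using proj_props[of A x] proj_props[of A y] horth_diff by blast
  with r have "herm (?P x - ?P y) (?P x - ?P y) = 0" unfolding horth_def by blast
  then have "?P x - ?P y = 0" by (rule herm_self0)
  then show "?P x = ?P y" by simp
qed

lemma proj_linear: "Vector_Spaces.linear (*s) (*s) (hproj (horth (crange A)))"
proof -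
  let ?P = "hproj (horth (crange A))"
  have "?P (x + y) = ?P x + ?P y" for x y
  proof (rule proj_char)
    show "?P x + ?P y \<in> horth (crange A)" using proj_props[of A x] proj_props[of A y] horth_add by blast
    have "x + y - (?P x + ?P y) = (x - ?P x) + (y - ?P y)" by simp
    then show "x + y - (?P x + ?P y) \<in> crange A" using proj_props[of A x] proj_props[of A y] crange_add by metis
  qed
  moreover have "?P (c *s x) = c *s ?P x" for c x
  proof (rule proj_char)
    show "c *s ?P x \<in> horth (crange A)" using proj_props[of A x] horth_scale by blast
    have "c *s x - c *s ?P x = c *s (x - ?P x)" by (simp add: vec.scale_right_diff_distrib)
    then show "c *s x - c *s ?P x \<in> crange A" using proj_props[of A x] crange_scale by metis
  qed
  ultimately show ?thesis
    by (simp add: Vector_Spaces.linear_iff vec.vector_space_axioms)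
qed

lemma proj_zero_iff: "hproj (horth (crange A)) x = 0 \<longleftrightarrow> x \<in> crange A"
proof -
  have "hproj (horth (crange A)) 0 = 0"
    by (rule proj_char) (auto simp: horth_def herm_def crange_mem intro!: exI[of _ 0])
  then show ?thesis using proj_eq_iff[of A x 0] by simp
qed

lemma proj_herm: "herm (hproj (horth (crange A)) x) x = herm (hproj (horth (crange A)) x) (hproj (horth (crange A)) x)"
proof -
  let ?P = "hproj (horth (crange A))"
  have "herm (?P x) (x - ?P x) = 0" using proj_props[of A x] unfolding horth_def by auto
  moreover have "herm (?P x) x = herm (?P x) (?P x) + herm (?P x) (x - ?P x)"
    using herm_add_right[of "?P x" "?P x" "x - ?P x"] by simp
  ultimately show ?thesis by simp
qed


lemma cplx_aux: "(a::complex) + b = 0 \<Longrightarrow> \<i> * a - \<i> * b = 0 \<Longrightarrow> a = 0 \<and> b = 0"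
proof -
  assume 1: "a + b = 0" and 2: "\<i> * a - \<i> * b = 0"
  from 2 have "\<i> * (a - b) = 0" by (simp add: right_diff_distrib)
  then have "a = b" by simp
  with 1 show ?thesis by simp
qed

lemma mvm_neg[simp]: "(A::complex^'n^'m) *v (- x) = - (A *v x)"
  by (simp add: matrix_vector_mult_def vec_eq_iff sum_negf)

lemma rot1:
  assumes "M *v y = z" "N *v cvec y = z"
  shows "M *v (\<i> *s y) + N *v cvec (\<i> *s y) = 0"
proof -
  have "M *v (\<i> *s y) + N *v cvec (\<i> *s y) = \<i> *s z + (- \<i>) *s z"
    by (simp add: vector_scalar_commute assms)
  also have "\<dots> = 0" by (simp add: vec_eq_iff)
  finally show ?thesis .
qed

lemma rot2:
  assumes "M *v y = z" "N *v cvec y = z"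
    and "M *v (\<i> *s (\<i> *s y)) + N *v cvec (\<i> *s (\<i> *s y)) = 0"
  shows "z = 0"
proof -
  have "M *v (\<i> *s (\<i> *s y)) + N *v cvec (\<i> *s (\<i> *s y)) = \<i> *s (\<i> *s z) + (- \<i>) *s ((- \<i>) *s z)"
    by (simp add: vector_scalar_commute assms)
  also have "\<dots> = - z + - z" by (simp add: vec_eq_iff)
  finally have "- z + - z = 0" using assms(3) by simp
  then show ?thesis by (simp add: vec_eq_iff)
qed

lemma C2_inter:
  assumes C2: "\<forall>z c. N *v c = z \<and> cmat M *v c = cvec z \<longrightarrow> z = 0"
    and h1: "N *v c = M *v x" and h2: "cmat M *v c = cmat N *v x"
  shows "M *v x = 0 \<and> cmat N *v x = 0"
proof -
  let ?u = "M *v x" let ?v = "cmat N *v x"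
  have a1: "N *v (c + cvec x) = ?u + cvec ?v" by (simp add: h1 matrix_vector_right_distrib)
  have a2: "cmat M *v (c + cvec x) = cvec (?u + cvec ?v)"
    by (simp add: h2 matrix_vector_right_distrib add.commute)
  have e1: "?u + cvec ?v = 0" using C2 a1 a2 by blast
  have b1: "N *v (\<i> *s c - \<i> *s cvec x) = \<i> *s ?u - \<i> *s cvec ?v"
    by (simp add: h1 matrix_vector_mult_diff_distrib vector_scalar_commute)
  have b2: "cmat M *v (\<i> *s c - \<i> *s cvec x) = cvec (\<i> *s ?u - \<i> *s cvec ?v)"
    by (simp add: h2 matrix_vector_mult_diff_distrib vector_scalar_commute vec_eq_iff)
  have e2: "\<i> *s ?u - \<i> *s cvec ?v = 0" using C2 b1 b2 by blast
  have "\<forall>i. ?u $ i = 0 \<and> cvec ?v $ i = 0"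
  proof
    fix i
    have "?u $ i + cvec ?v $ i = 0" "\<i> * ?u $ i - \<i> * cvec ?v $ i = 0"
      using e1 e2 by (simp_all add: vec_eq_iff)
    then show "?u $ i = 0 \<and> cvec ?v $ i = 0" by (rule cplx_aux)
  qed
  then have "?u = 0" "cvec ?v = 0" by (simp_all add: vec_eq_iff)
  then show ?thesis by (simp del: cvec_mult)
qed

lemma sub_iff:
  "vec.subspace {z. M *v z + N *v cvec z = 0} \<longleftrightarrow>
   (\<forall>z c. N *v c = z \<and> cmat M *v c = cvec z \<longrightarrow> z = 0)"
proof
  assume S: "vec.subspace {z. M *v z + N *v cvec z = 0}"
  show "\<forall>z c. N *v c = z \<and> cmat M *v c = cvec z \<longrightarrow> z = 0"
  proof (intro allI impI)
    fix z c assume zc: "N *v c = z \<and> cmat M *v c = cvec z"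
    let ?y = "cvec c"
    have "cvec (cmat M *v c) = cvec (cvec z)" using zc by simp
    then have m: "M *v ?y = z" by (simp only: cvec_mult cmat_cmat cvec_cvec)
    have n: "N *v cvec ?y = z" using zc by simp
    have "\<i> *s ?y \<in> {z. M *v z + N *v cvec z = 0}" using rot1[OF m n] by (simp only: mem_Collect_eq)
    then have "\<i> *s (\<i> *s ?y) \<in> {z. M *v z + N *v cvec z = 0}" by (rule vec.subspace_scale[OF S])
    then have "M *v (\<i> *s (\<i> *s ?y)) + N *v cvec (\<i> *s (\<i> *s ?y)) = 0" by (simp only: mem_Collect_eq)
    from rot2[OF m n this] show "z = 0" .
  qed
next
  assume C2: "\<forall>z c. N *v c = z \<and> cmat M *v c = cvec z \<longrightarrow> z = 0"
  have key: "M *v z = 0 \<and> N *v cvec z = 0" if z: "M *v z + N *v cvec z = 0" for z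
  proof -
    have nz: "N *v cvec z = - (M *v z)" using z by (metis add.commute eq_neg_iff_add_eq_0)
    have "N *v ((- \<i>) *s cvec z) = \<i> *s (M *v z)"
      by (simp add: vector_scalar_commute nz)
    moreover have "cmat M *v ((- \<i>) *s cvec z) = cvec (\<i> *s (M *v z))"
      by (simp add: vector_scalar_commute vec_eq_iff)
    ultimately have "\<i> *s (M *v z) = 0" using C2 by (metis (no_types))
    then have "M *v z = 0" by (simp add: vec_eq_iff)
    then show ?thesis using nz by simp
  qed
  show "vec.subspace {z. M *v z + N *v cvec z = 0}"
    unfolding vec.subspace_def
  proof (intro conjI ballI allI)
    show "0 \<in> {z. M *v z + N *v cvec z = 0}" by simp
  next
    fix x y assume a: "x \<in> {z. M *v z + N *v cvec z = 0}" "y \<in> {z. M *v z + N *v cvec z = 0}"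
    show "x + y \<in> {z. M *v z + N *v cvec z = 0}"
    proof -
      have "M *v (x + y) + N *v cvec (x + y) = (M *v x + N *v cvec x) + (M *v y + N *v cvec y)"
        by (simp add: matrix_vector_right_distrib)
      then show ?thesis using a by simp
    qed
  next
    fix c x assume "x \<in> {z. M *v z + N *v cvec z = 0}"
    then have "M *v x = 0 \<and> N *v cvec x = 0" using key by simp
    then show "c *s x \<in> {z. M *v z + N *v cvec z = 0}"
      by (simp add: vector_scalar_commute)
  qed
qed

lemma inj_iff:
  "inj (\<lambda>z. hproj (horth (crange (stack_mat N (cmat M)))) (stack_vec z (cvec z))) \<longleftrightarrow>
   (\<forall>z c. N *v c = z \<and> cmat M *v c = cvec z \<longrightarrow> z = 0)"
proof -
  let ?f = "\<lambda>z. hproj (horth (crange (stack_mat N (cmat M)))) (stack_vec z (cvec z))"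
  have key: "?f x = ?f y \<longleftrightarrow> (\<exists>c. N *v c = x - y \<and> cmat M *v c = cvec (x - y))" for x y
    unfolding proj_eq_iff crange_mem stack_vec_diff stack_mult stack_vec_eq
    by (auto simp: eq_commute)
  show ?thesis
  proof
    assume "inj ?f"
    then show "\<forall>z c. N *v c = z \<and> cmat M *v c = cvec z \<longrightarrow> z = 0"
      using key[of _ 0] unfolding inj_def by fastforce
  next
    assume C2: "\<forall>z c. N *v c = z \<and> cmat M *v c = cvec z \<longrightarrow> z = 0"
    show "inj ?f" unfolding inj_def
      using key C2 by (metis eq_iff_diff_eq_0)
  qed
qed

lemma three_to_two:
  assumes H: "\<forall>p \<in> sys_range M N. {z. M *v z + N *v cvec z = p}
                = {z. (U ** M + V ** cmat N) *v z = U *v p + V *v cvec p}"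
  shows "\<forall>z c. N *v c = z \<and> cmat M *v c = cvec z \<longrightarrow> z = 0"
proof (intro allI impI)
  fix z c assume zc: "N *v c = z \<and> cmat M *v c = cvec z"
  let ?y = "cvec c"
  let ?G = "U ** M + V ** cmat N"
  have "cvec (cmat M *v c) = cvec (cvec z)" using zc by simp
  then have m: "M *v ?y = z" by (simp only: cvec_mult cmat_cmat cvec_cvec)
  have n: "N *v cvec ?y = z" using zc by (simp only: cvec_cvec)
  have p0: "0 \<in> sys_range M N" unfolding sys_range_def by (auto intro!: exI[of _ 0])
  have H0: "{z. M *v z + N *v cvec z = 0} = {z. ?G *v z = U *v 0 + V *v cvec 0}"
    by (rule bspec[OF H p0])
  have E: "?G *v w = 0 \<longleftrightarrow> M *v w + N *v cvec w = 0" for w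
  proof -
    have "w \<in> {z. M *v z + N *v cvec z = 0} \<longleftrightarrow> w \<in> {z. ?G *v z = U *v 0 + V *v cvec 0}"
      by (simp only: H0)
    then show ?thesis by simp
  qed
  have "?G *v (\<i> *s ?y) = 0" using rot1[OF m n] E by blast
  then have "?G *v (\<i> *s (\<i> *s ?y)) = 0" by (simp add: vector_scalar_commute)
  then have "M *v (\<i> *s (\<i> *s ?y)) + N *v cvec (\<i> *s (\<i> *s ?y)) = 0" using E by blast
  from rot2[OF m n this] show "z = 0" .
qed


lemma two_to_three:
  fixes M N :: "complex^'n^'n"
  assumes C2: "\<forall>z c. N *v c = z \<and> cmat M *v c = cvec z \<longrightarrow> z = 0"
  shows "\<exists>U V :: complex^'n^'n. \<forall>p \<in> sys_range M N.
                  {z. M *v z + N *v cvec z = p}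
                = {z. (U ** M + V ** cmat N) *v z = U *v p + V *v cvec p}"
proof -
  define A where "A = stack_mat N (cmat M)"
  define B where "B = stack_mat M (cmat N)"
  define P where "P = hproj (horth (crange A))"
  define L where "L = (\<lambda>u. hadj B *v P u)"
  have linL: "Vector_Spaces.linear (*s) (*s) L"
    using Vector_Spaces.linear_compose[OF proj_linear[of A] matrix_vector_mul_linear_gen[of "hadj B"]]
    unfolding L_def P_def o_def by simp
  define Lm where "Lm = matrix L"
  have Lm: "Lm *v u = L u" for u unfolding Lm_def by (rule matrix_works[OF linL])
  define U :: "complex^'n^'n" where "U = (\<chi> i j. Lm $ i $ (Inl j))"
  define V :: "complex^'n^'n" where "V = (\<chi> i j. Lm $ i $ (Inr j))"
  have UV: "U *v a + V *v b = L (stack_vec a b)" for a b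
  proof -
    have "Lm *v stack_vec a b = U *v a + V *v b"
      unfolding vec_eq_iff matrix_vector_mult_def
    proof
      fix i
      have "(\<Sum>k\<in>(UNIV::('n+'n) set). Lm $ i $ k * stack_vec a b $ k)
          = (\<Sum>k\<in>UNIV <+> UNIV. Lm $ i $ k * stack_vec a b $ k)" by simp
      also have "\<dots> = (\<Sum>j\<in>UNIV. Lm $ i $ Inl j * a $ j) + (\<Sum>j\<in>UNIV. Lm $ i $ Inr j * b $ j)"
        by (subst sum.Plus) (auto simp: stack_vec_def)
      finally show "(\<chi> i. \<Sum>j\<in>UNIV. Lm $ i $ j * stack_vec a b $ j) $ i =
         ((\<chi> i. \<Sum>j\<in>UNIV. U $ i $ j * a $ j) + (\<chi> i. \<Sum>j\<in>UNIV. V $ i $ j * b $ j)) $ i"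
        by (simp add: U_def V_def)
    qed
    then show ?thesis using Lm by simp
  qed
  have G: "(U ** M + V ** cmat N) *v z = L (B *v z)" for z
    by (simp add: matrix_vector_mult_add_rdistrib matrix_vector_mul_assoc[symmetric] UV B_def stack_mult)
  have LA: "L (A *v c) = 0" for c
  proof -
    have "P (A *v c) = 0" unfolding P_def proj_zero_iff crange_mem by blast
    then show ?thesis unfolding L_def by simp
  qed
  have Ladd: "L (u + v) = L u + L v" for u v
    using Lm matrix_vector_right_distrib by metis
  have Ldiff: "L (u - v) = L u - L v" for u v
    using Lm matrix_vector_mult_diff_distrib by metis
  have LB: "M *v x = 0 \<and> cmat N *v x = 0" if h: "L (B *v x) = 0" for x
  proof -
    have "herm (L (B *v x)) x = herm (P (B *v x)) (P (B *v x))"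
      unfolding L_def hadj_herm P_def by (rule proj_herm)
    moreover have "herm (L (B *v x)) x = 0" using h by (simp add: herm_def)
    ultimately have "P (B *v x) = 0" using herm_self0 by metis
    then have "B *v x \<in> crange A" unfolding P_def proj_zero_iff .
    then obtain c where "B *v x = A *v c" unfolding crange_mem by blast
    then have "N *v c = M *v x" "cmat M *v c = cmat N *v x"
      unfolding A_def B_def stack_mult stack_vec_eq by auto
    then show ?thesis using C2_inter[OF C2] by blast
  qed
  have decomp: "stack_vec p (cvec p) = B *v z + A *v cvec z" if "M *v z + N *v cvec z = p" for z p
    using that unfolding A_def B_def stack_mult stack_vec_add by (auto simp: stack_vec_eq add.commute)
  show ?thesis
  proof (intro exI ballI)
    fix p assume "p \<in> sys_range M N"
    then obtain z0 where z0: "M *v z0 + N *v cvec z0 = p" unfolding sys_range_def by blast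
    show "{z. M *v z + N *v cvec z = p} = {z. (U ** M + V ** cmat N) *v z = U *v p + V *v cvec p}"
    proof (intro set_eqI iffI; simp only: mem_Collect_eq)
      fix z assume z: "M *v z + N *v cvec z = p"
      show "(U ** M + V ** cmat N) *v z = U *v p + V *v cvec p"
        unfolding G UV decomp[OF z] Ladd LA by simp
    next
      fix z assume z: "(U ** M + V ** cmat N) *v z = U *v p + V *v cvec p"
      then have "L (B *v z) = L (B *v z0)"
        unfolding G UV decomp[OF z0] Ladd LA by simp
      then have "L (B *v (z - z0)) = 0"
        by (simp add: matrix_vector_mult_diff_distrib Ldiff)
      then have "M *v (z - z0) = 0 \<and> cmat N *v (z - z0) = 0" by (rule LB)
      then have a: "M *v z = M *v z0" and b: "cmat N *v z = cmat N *v z0"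
        by (auto simp: matrix_vector_mult_diff_distrib)
      have "N *v cvec z = N *v cvec z0" using arg_cong[OF b, of cvec] by simp
      note a this
      then show "M *v z + N *v cvec z = p" using z0 by simp
    qed
  qed
qed

theorem proposition1:
  fixes M N :: "complex^'n^'n"
  defines "Pperp \<equiv> hproj (horth (crange (stack_mat N (cmat M))))"
  shows "(vec.subspace {z. M *v z + N *v cvec z = 0}
            \<longleftrightarrow> inj (\<lambda>z. Pperp (stack_vec z (cvec z))))
       \<and> (inj (\<lambda>z. Pperp (stack_vec z (cvec z)))
            \<longleftrightarrow> (\<exists>U V :: complex^'n^'n. \<forall>p \<in> sys_range M N.
                  {z. M *v z + N *v cvec z = p}
                = {z. (U ** M + V ** cmat N) *v z = U *v p + V *v cvec p}))"
proof -
  let ?C = "\<forall>z c. N *v c = z \<and> cmat M *v c = cvec z \<longrightarrow> z = 0"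
  have 1: "vec.subspace {z. M *v z + N *v cvec z = 0} \<longleftrightarrow> ?C" by (rule sub_iff)
  have 2: "inj (\<lambda>z. Pperp (stack_vec z (cvec z))) \<longleftrightarrow> ?C" unfolding Pperp_def by (rule inj_iff)
  have 3: "(\<exists>U V :: complex^'n^'n. \<forall>p \<in> sys_range M N.
                  {z. M *v z + N *v cvec z = p}
                = {z. (U ** M + V ** cmat N) *v z = U *v p + V *v cvec p}) \<longleftrightarrow> ?C"
  proof
    assume "\<exists>U V :: complex^'n^'n. \<forall>p \<in> sys_range M N.
                  {z. M *v z + N *v cvec z = p}
                = {z. (U ** M + V ** cmat N) *v z = U *v p + V *v cvec p}"
    then obtain U V :: "complex^'n^'n" where "\<forall>p \<in> sys_range M N.
                  {z. M *v z + N *v cvec z = p}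
                = {z. (U ** M + V ** cmat N) *v z = U *v p + V *v cvec p}" by blast
    then show ?C by (rule three_to_two)
  next
    assume ?C
    then show "\<exists>U V :: complex^'n^'n. \<forall>p \<in> sys_range M N.
                  {z. M *v z + N *v cvec z = p}
                = {z. (U ** M + V ** cmat N) *v z = U *v p + V *v cvec p}" by (rule two_to_three)
  qed
  show ?thesis by (simp only: 1 2 3 simp_thms)
qed

end
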